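(* Let $n\ge1$ and let $\equiv$ be a lattice congruence of the weak order on $S_n$. For every equivalence class $X$ of $\equiv$, the projection $p(X)=\{p(\pi):\pi\in X\}$ is an equivalence class of the restriction $\equiv^*$. In particular, any two equivalence classes $X,Y$ of $\equiv$ satisfy either $p(X)=p(Y)$ or $p(X)\cap p(Y)=\emptyset$.
   Context: $S_n$ is the set of permutations of $[n]$ in one-line notation, with the weak order (inclusion of inversion sets), which is a lattice. A lattice congruence is an equivalence relation $\equiv$ on $S_n$ such that $\pi\equiv\pi'$ and $\rho\equiv\rho'$ imply $\pi\vee\rho\equiv\pi'\vee\rho'$ and $\pi\wedge\rho\equiv\pi'\wedge\rho'$. For $\pi\in S_n$, $p(\pi)\in S_{n-1}$ is obtained by deleting the value $n$. For $\sigma\in S_{n-1}$, $c_n(\sigma)\in S_n$ is $\sigma$ with $n$ appended at the end. The restriction $\equiv^*$ is the relation on $S_{n-1}$ given by $\sigma\equiv^*\tau$ iff $c_n(\sigma)\equiv c_n(\tau)$; it is a lattice congruence on $S_{n-1}$. *)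

theory Defs
  imports Main
begin

definition perms :: "nat \<Rightarrow> nat list set" where
  "perms n = {xs. distinct xs \<and> set xs = {1..n}}"

definition invs :: "nat list \<Rightarrow> (nat \<times> nat) set" where
  "invs xs = {(a,b). a < b \<and> (\<exists>i j. i < j \<and> j < length xs \<and> xs ! i = b \<and> xs ! j = a)}"

definition weak_le :: "nat list \<Rightarrow> nat list \<Rightarrow> bool" where
  "weak_le xs ys \<longleftrightarrow> invs xs \<subseteq> invs ys"

definition is_join :: "nat \<Rightarrow> nat list \<Rightarrow> nat list \<Rightarrow> nat list \<Rightarrow> bool" where
  "is_join n x y z \<longleftrightarrow> z \<in> perms n \<and> weak_le x z \<and> weak_le y z \<and>
     (\<forall>w\<in>perms n. weak_le x w \<and> weak_le y w \<longrightarrow> weak_le z w)"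

definition is_meet :: "nat \<Rightarrow> nat list \<Rightarrow> nat list \<Rightarrow> nat list \<Rightarrow> bool" where
  "is_meet n x y z \<longleftrightarrow> z \<in> perms n \<and> weak_le z x \<and> weak_le z y \<and>
     (\<forall>w\<in>perms n. weak_le w x \<and> weak_le w y \<longrightarrow> weak_le w z)"

definition lattice_congruence :: "nat \<Rightarrow> (nat list \<times> nat list) set \<Rightarrow> bool" where
  "lattice_congruence n R \<longleftrightarrow> equiv (perms n) R \<and>
     (\<forall>x x' y y' z z'. (x,x') \<in> R \<longrightarrow> (y,y') \<in> R \<longrightarrow>
        is_join n x y z \<longrightarrow> is_join n x' y' z' \<longrightarrow> (z,z') \<in> R) \<and>
     (\<forall>x x' y y' z z'. (x,x') \<in> R \<longrightarrow> (y,y') \<in> R \<longrightarrow>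
        is_meet n x y z \<longrightarrow> is_meet n x' y' z' \<longrightarrow> (z,z') \<in> R)"

definition proj :: "nat \<Rightarrow> nat list \<Rightarrow> nat list" where
  "proj n xs = filter (\<lambda>v. v \<noteq> n) xs"

definition cn :: "nat \<Rightarrow> nat list \<Rightarrow> nat list" where
  "cn n s = s @ [n]"

definition restr :: "nat \<Rightarrow> (nat list \<times> nat list) set \<Rightarrow> (nat list \<times> nat list) set" where
  "restr n R = {(s,t). s \<in> perms (n - 1) \<and> t \<in> perms (n - 1) \<and> (cn n s, cn n t) \<in> R}"

end

theory Submission
  imports Defs
begin

definition bef :: "nat list \<Rightarrow> nat \<Rightarrow> nat \<Rightarrow> bool" where
  "bef xs x y \<longleftrightarrow> (\<exists>i j. i < j \<and> j < length xs \<and> xs ! i = x \<and> xs ! j = y)"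

lemma invs_bef: "invs xs = {(a,b). a < b \<and> bef xs b a}"
  by (auto simp: invs_def bef_def)

lemma bef_set: "bef xs x y \<Longrightarrow> x \<in> set xs \<and> y \<in> set xs"
  unfolding bef_def by auto

lemma bef_append: "bef (xs@ys) x y \<longleftrightarrow> bef xs x y \<or> bef ys x y \<or> (x \<in> set xs \<and> y \<in> set ys)"
proof
  assume "bef (xs@ys) x y"
  then obtain i j where ij: "i < j" "j < length (xs@ys)" "(xs@ys)!i = x" "(xs@ys)!j = y"
    unfolding bef_def by blast
  show "bef xs x y \<or> bef ys x y \<or> (x \<in> set xs \<and> y \<in> set ys)"
  proof (cases "j < length xs")
    case True
    have "bef xs x y" unfolding bef_def
      apply (rule exI[of _ i], rule exI[of _ j])
      using ij True by (auto simp: nth_append)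
    then show ?thesis by blast
  next
    case False
    show ?thesis
    proof (cases "i < length xs")
      case True
      then have "x \<in> set xs" "y \<in> set ys" using ij False by (auto simp: nth_append)
      then show ?thesis by blast
    next
      case F2: False
      have "bef ys x y" unfolding bef_def
        apply (rule exI[of _ "i - length xs"], rule exI[of _ "j - length xs"])
        using ij False F2 by (auto simp: nth_append)
      then show ?thesis by blast
    qed
  qed
next
  assume "bef xs x y \<or> bef ys x y \<or> (x \<in> set xs \<and> y \<in> set ys)"
  then show "bef (xs@ys) x y"
  proof (elim disjE conjE)
    assume "bef xs x y"
    then obtain i j where ij: "i < j" "j < length xs" "xs!i = x" "xs!j = y"
      unfolding bef_def by blast
    then show ?thesis unfolding bef_def
      apply -
      apply (rule exI[of _ i], rule exI[of _ j])
      by (auto simp: nth_append)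
  next
    assume "bef ys x y"
    then obtain i j where ij: "i < j" "j < length ys" "ys!i = x" "ys!j = y"
      unfolding bef_def by blast
    then show ?thesis unfolding bef_def
      apply -
      apply (rule exI[of _ "i + length xs"], rule exI[of _ "j + length xs"])
      by (auto simp: nth_append)
  next
    assume "x \<in> set xs" "y \<in> set ys"
    then obtain i j where "i < length xs" "xs!i = x" "j < length ys" "ys!j = y"
      by (auto simp: in_set_conv_nth)
    then show ?thesis unfolding bef_def
      apply -
      apply (rule exI[of _ i], rule exI[of _ "j + length xs"])
      by (auto simp: nth_append)
  qed
qed

lemma bef_Nil[simp]: "\<not> bef [] x y" by (simp add: bef_def)
lemma bef_single[simp]: "\<not> bef [a] x y" by (simp add: bef_def)

lemma bef_Cons: "bef (a#xs) x y \<longleftrightarrow> (x = a \<and> y \<in> set xs) \<or> bef xs x y"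
  using bef_append[of "[a]" xs] by auto

lemma bef_filter: "bef (filter P xs) x y \<longleftrightarrow> P x \<and> P y \<and> bef xs x y"
  by (induction xs) (auto simp: bef_Cons dest: bef_set)

lemma bef_rev: "bef (rev xs) x y \<longleftrightarrow> bef xs y x"
  by (induction xs) (auto simp: bef_Cons bef_append)

lemma bef_upt: "bef [m..<k] x y \<longleftrightarrow> m \<le> x \<and> x < y \<and> y < k"
  by (induction k) (auto simp: bef_append)

lemma bef_asym: "distinct xs \<Longrightarrow> bef xs x y \<Longrightarrow> \<not> bef xs y x"
  unfolding bef_def
  by (metis distinct_conv_nth order.strict_trans not_less_iff_gr_or_eq)

lemma bef_trans: "distinct xs \<Longrightarrow> bef xs x y \<Longrightarrow> bef xs y z \<Longrightarrow> bef xs x z"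
  unfolding bef_def
  by (metis distinct_conv_nth order.strict_trans order.strict_trans1 less_imp_le)

lemma bef_total: "x \<in> set xs \<Longrightarrow> y \<in> set xs \<Longrightarrow> x \<noteq> y \<Longrightarrow> bef xs x y \<or> bef xs y x"
  unfolding bef_def in_set_conv_nth
  by (metis linorder_neqE_nat)


definition Nset :: "nat \<Rightarrow> nat list \<Rightarrow> nat set" where
  "Nset n x = {a. bef x n a}"

lemma bef_proj: "bef (proj n x) a b \<longleftrightarrow> a \<noteq> n \<and> b \<noteq> n \<and> bef x a b"
  unfolding proj_def by (simp add: bef_filter)

lemma proj_perms: "n \<ge> 1 \<Longrightarrow> x \<in> perms n \<Longrightarrow> proj n x \<in> perms (n - 1)"
  unfolding perms_def proj_def by auto

lemma invs_proj_sub: "invs (proj n x) \<subseteq> {(a,b). b \<noteq> n}"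
  by (auto simp: invs_bef bef_proj)

lemma perms_bef_le: "x \<in> perms n \<Longrightarrow> bef x a b \<Longrightarrow> 1 \<le> a \<and> a \<le> n \<and> 1 \<le> b \<and> b \<le> n"
  unfolding perms_def by (auto dest: bef_set)

lemma invs_decomp: "x \<in> perms n \<Longrightarrow> invs x = invs (proj n x) \<union> (\<lambda>a. (a,n)) ` Nset n x"
proof -
  assume x: "x \<in> perms n"
  show ?thesis
  proof (rule set_eqI, clarify)
    fix a b
    show "(a,b) \<in> invs x \<longleftrightarrow> (a,b) \<in> invs (proj n x) \<union> (\<lambda>a. (a,n)) ` Nset n x"
    proof (cases "b = n")
      case True
      have "distinct x" using x by (simp add: perms_def)
      then have "bef x n a \<Longrightarrow> a \<noteq> n" using bef_asym by blast
      then show ?thesis using True perms_bef_le[OF x, of b a] unfolding invs_bef Nset_def bef_proj by auto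
    next
      case False
      then show ?thesis using perms_bef_le[OF x, of b a] unfolding invs_bef Nset_def bef_proj by auto
    qed
  qed
qed

lemma Nset_sub: "x \<in> perms n \<Longrightarrow> Nset n x \<subseteq> {1..n-1}"
proof
  fix a assume x: "x \<in> perms n" and "a \<in> Nset n x"
  then have b: "bef x n a" by (simp add: Nset_def)
  have "distinct x" using x by (simp add: perms_def)
  then have "a \<noteq> n" using b bef_asym by blast
  then show "a \<in> {1..n-1}" using perms_bef_le[OF x b] by auto
qed

lemma weak_le_decomp: "x \<in> perms n \<Longrightarrow> y \<in> perms n \<Longrightarrow>
   weak_le x y \<longleftrightarrow> invs (proj n x) \<subseteq> invs (proj n y) \<and> Nset n x \<subseteq> Nset n y"
proof -
  assume x: "x \<in> perms n" and y: "y \<in> perms n"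
  have sx: "invs (proj n x) \<subseteq> {(a,b). b \<noteq> n}" "invs (proj n y) \<subseteq> {(a,b). b \<noteq> n}"
    by (rule invs_proj_sub)+
  show ?thesis
  proof
    assume "weak_le x y"
    then have h: "invs (proj n x) \<union> (\<lambda>a. (a,n)) ` Nset n x \<subseteq> invs (proj n y) \<union> (\<lambda>a. (a,n)) ` Nset n y"
      unfolding weak_le_def using invs_decomp[OF x] invs_decomp[OF y] by simp
    have 1: "invs (proj n x) \<subseteq> invs (proj n y)"
    proof
      fix p assume p: "p \<in> invs (proj n x)"
      then have "snd p \<noteq> n" using sx by auto
      then show "p \<in> invs (proj n y)" using h p by auto
    qed
    have 2: "Nset n x \<subseteq> Nset n y"
    proof
      fix a assume "a \<in> Nset n x"
      then have "(a,n) \<in> invs (proj n y) \<union> (\<lambda>a. (a,n)) ` Nset n y" using h by auto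
      then show "a \<in> Nset n y" using sx by auto
    qed
    show "invs (proj n x) \<subseteq> invs (proj n y) \<and> Nset n x \<subseteq> Nset n y" using 1 2 by simp
  next
    assume "invs (proj n x) \<subseteq> invs (proj n y) \<and> Nset n x \<subseteq> Nset n y"
    then show "weak_le x y" unfolding weak_le_def using invs_decomp[OF x] invs_decomp[OF y] by auto
  qed
qed

lemma ins_props:
  assumes "n \<ge> 1" "u @ v \<in> perms (n - 1)"
  shows "u @ n # v \<in> perms n" "proj n (u @ n # v) = u @ v" "Nset n (u @ n # v) = set v"
proof -
  have d: "distinct (u@v)" and s: "set (u@v) = {1..n-1}" using assms(2) by (auto simp: perms_def)
  have "n \<notin> {1..n-1}" using assms(1) by auto
  then have nn: "n \<notin> set u" "n \<notin> set v" using s by auto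
  show "u @ n # v \<in> perms n" using d s nn assms(1) by (auto simp: perms_def)
  show "proj n (u @ n # v) = u @ v" using nn unfolding proj_def
    by (simp add: filter_id_conv) (metis (mono_tags) filter_True)
  show "Nset n (u @ n # v) = set v" using nn unfolding Nset_def
    by (auto simp: bef_append bef_Cons dest: bef_set)
qed

lemma cn_props:
  assumes "n \<ge> 1" "s \<in> perms (n - 1)"
  shows "cn n s \<in> perms n" "proj n (cn n s) = s" "Nset n (cn n s) = {}"
  using ins_props[OF assms(1), of s "[]"] assms(2) by (auto simp: cn_def)

lemma top_props:
  assumes "n \<ge> 1" "s \<in> perms (n - 1)"
  shows "n # s \<in> perms n" "proj n (n # s) = s" "Nset n (n # s) = {1..n-1}"
  using ins_props[OF assms(1), of "[]" s] assms(2) by (auto simp: perms_def)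

lemma split_suffix: "\<exists>u v. q = u @ v \<and> set v \<subseteq> A \<and> (u \<noteq> [] \<longrightarrow> last u \<notin> A)"
proof (intro exI conjI)
  let ?P = "\<lambda>x. x \<in> A"
  show "q = rev (dropWhile ?P (rev q)) @ rev (takeWhile ?P (rev q))"
    by (metis rev_append rev_rev_ident takeWhile_dropWhile_id)
  show "set (rev (takeWhile ?P (rev q))) \<subseteq> A" by (auto dest: set_takeWhileD)
  show "rev (dropWhile ?P (rev q)) \<noteq> [] \<longrightarrow> last (rev (dropWhile ?P (rev q))) \<notin> A"
    by (metis Nil_is_rev_conv hd_dropWhile last_rev)
qed

lemma bef_last: "x \<in> set u \<Longrightarrow> x \<noteq> last u \<Longrightarrow> bef u x (last u)"
proof -
  assume a: "x \<in> set u" "x \<noteq> last u"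
  then have ne: "u \<noteq> []" by auto
  have e: "u = butlast u @ [last u]" using ne by simp
  have "x \<in> set (butlast u)" using a e by (metis Un_iff empty_iff empty_set set_ConsD set_append)
  then show ?thesis using e bef_append[of "butlast u" "[last u]"] by (metis list.set_intros(1))
qed


lemma invs_trans: "distinct x \<Longrightarrow> trans (invs x)"
  unfolding trans_def invs_bef using bef_trans by fastforce

lemma invs_cocl: "x \<in> perms n \<Longrightarrow> (a,c) \<in> invs x \<Longrightarrow> a < b \<Longrightarrow> b < c \<Longrightarrow>
   (a,b) \<in> invs x \<or> (b,c) \<in> invs x"
proof -
  assume x: "x \<in> perms n" and ac: "(a,c) \<in> invs x" and ab: "a < b" and bc: "b < c"
  have d: "distinct x" using x by (simp add: perms_def)
  have ca: "bef x c a" using ac by (simp add: invs_bef)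
  have "b \<in> set x" using perms_bef_le[OF x ca] ab bc x by (auto simp: perms_def)
  moreover have "a \<in> set x" using ca bef_set by blast
  ultimately have "bef x a b \<or> bef x b a" using bef_total ab by blast
  then show ?thesis
  proof
    assume "bef x a b"
    then have "bef x c b" using bef_trans[OF d ca] by blast
    then show ?thesis using bc by (simp add: invs_bef)
  next
    assume "bef x b a" then show ?thesis using ab by (simp add: invs_bef)
  qed
qed

lemma invs_bound: "x \<in> perms n \<Longrightarrow> invs x \<subseteq> {(a,b). 1 \<le> a \<and> a < b \<and> b \<le> n}"
proof
  fix p assume x: "x \<in> perms n" and "p \<in> invs x"
  then obtain a b where p: "p = (a,b)" "a < b" "bef x b a" by (auto simp: invs_bef)
  then show "p \<in> {(a,b). 1 \<le> a \<and> a < b \<and> b \<le> n}" using perms_bef_le[OF x p(3)] by auto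
qed

lemma perms0: "perms 0 = {[]}" by (auto simp: perms_def)

lemma construct:
  "T \<subseteq> {(a,b). 1 \<le> a \<and> a < b \<and> b \<le> n} \<Longrightarrow> trans T \<Longrightarrow>
   (\<And>a b c. (a,c) \<in> T \<Longrightarrow> a < b \<Longrightarrow> b < c \<Longrightarrow> (a,b) \<in> T \<or> (b,c) \<in> T) \<Longrightarrow>
   \<exists>z\<in>perms n. invs z = T"
proof (induction n arbitrary: T)
  case 0
  then have "T = {}" by auto
  then show ?case by (auto simp: perms0 invs_bef)
next
  case (Suc m)
  define T' where "T' = {(a,b) \<in> T. b \<noteq> Suc m}"
  have b': "T' \<subseteq> {(a,b). 1 \<le> a \<and> a < b \<and> b \<le> m}"
  proof (clarify)
    fix a b assume "(a,b) \<in> T'"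
    then have "(a,b) \<in> T" "b \<noteq> Suc m" by (simp_all add: T'_def)
    then show "1 \<le> a \<and> a < b \<and> b \<le> m" using Suc.prems(1) by fastforce
  qed
  have t': "trans T'"
  proof (rule transI)
    fix a b c assume "(a,b) \<in> T'" "(b,c) \<in> T'"
    then have "(a,b) \<in> T" "(b,c) \<in> T" "c \<noteq> Suc m" by (simp_all add: T'_def)
    then show "(a,c) \<in> T'" using Suc.prems(2) unfolding T'_def by (simp add: transD[of T a b c])
  qed
  have c': "(a,b) \<in> T' \<or> (b,c) \<in> T'" if "(a,c) \<in> T'" "a < b" "b < c" for a b c
  proof -
    have "(a,c) \<in> T" "c \<noteq> Suc m" using that(1) by (simp_all add: T'_def)
    moreover have "c \<le> Suc m" using \<open>(a,c) \<in> T\<close> Suc.prems(1) by fastforce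
    ultimately have "(a,b) \<in> T \<or> (b,c) \<in> T" using Suc.prems(3)[of a c b] that by blast
    then show ?thesis using \<open>c \<noteq> Suc m\<close> \<open>c \<le> Suc m\<close> that by (auto simp: T'_def)
  qed
  have "\<exists>z\<in>perms m. invs z = T'"
    apply (rule Suc.IH[OF b' t'])
    using c' by blast
  then obtain q where q: "q \<in> perms m" "invs q = T'" by blast
  define A where "A = {a. (a, Suc m) \<in> T}"
  obtain u v where uv: "q = u @ v" "set v \<subseteq> A" "u \<noteq> [] \<longrightarrow> last u \<notin> A"
    using split_suffix[of q A] by (elim exE conjE) simp
  have dq: "distinct q" and sq: "set q = {1..m}" using q(1) by (auto simp: perms_def)
  have sv: "set v = A"
  proof
    show "set v \<subseteq> A" by fact
    show "A \<subseteq> set v"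
    proof (rule ccontr)
      assume "\<not> A \<subseteq> set v"
      then obtain a where a: "a \<in> A" "a \<notin> set v" by blast
      have aT: "(a, Suc m) \<in> T" using a by (simp add: A_def)
      then have "1 \<le> a" "a \<le> m" using Suc.prems(1) by auto
      then have "a \<in> set u" using sq uv(1) a(2) by auto
      then have ne: "u \<noteq> []" by auto
      define l where "l = last u"
      have lA: "l \<notin> A" using uv(3) ne by (simp add: l_def)
      have al: "a \<noteq> l" using lA a(1) by auto
      have lu: "l \<in> set u" using ne by (simp add: l_def)
      then have "1 \<le> l" "l \<le> m" using sq uv(1) by auto
      have "bef u a l" using bef_last[OF \<open>a \<in> set u\<close>] al by (simp add: l_def)
      then have bq: "bef q a l" using uv(1) bef_append by blast
      show False
      proof (cases "l < a")
        case True
        then have "(l,a) \<in> invs q" using bq by (simp add: invs_bef)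
        then have "(l,a) \<in> T'" using q(2) by simp
        then have "(l,a) \<in> T" by (simp add: T'_def)
        then have "(l, Suc m) \<in> T" using aT Suc.prems(2) by (meson transD)
        then show False using lA by (simp add: A_def)
      next
        case False
        then have "a < l" using al by auto
        then have "(a,l) \<in> T \<or> (l, Suc m) \<in> T" using Suc.prems(3)[OF aT] \<open>l \<le> m\<close> by auto
        then have "(a,l) \<in> T" using lA by (auto simp: A_def)
        then have "(a,l) \<in> invs q" using q(2) \<open>l \<le> m\<close> by (simp add: T'_def)
        then have "bef q l a" by (simp add: invs_bef)
        then show False using bef_asym[OF dq bq] by blast
      qed
    qed
  qed
  have up: "u @ v \<in> perms (Suc m - 1)" using q(1) uv(1) by simp
  note ip = ins_props[OF _ up]
  have z: "u @ Suc m # v \<in> perms (Suc m)" using ip by simp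
  have "invs (u @ Suc m # v) = invs (u @ v) \<union> (\<lambda>a. (a, Suc m)) ` set v"
    using invs_decomp[OF z] ip by simp
  also have "\<dots> = T' \<union> (\<lambda>a. (a, Suc m)) ` A" using q(2) uv(1) sv by simp
  also have "\<dots> = T"
  proof (rule set_eqI, clarify)
    fix a b show "(a,b) \<in> T' \<union> (\<lambda>a. (a, Suc m)) ` A \<longleftrightarrow> (a,b) \<in> T"
      by (cases "b = Suc m") (auto simp: T'_def A_def)
  qed
  finally show ?case using z by blast
qed

lemma trancl_lt: "(a,c) \<in> S\<^sup>+ \<Longrightarrow> (\<And>a b. (a,b) \<in> S \<Longrightarrow> a < (b::nat)) \<Longrightarrow> a < c"
  by (induction rule: trancl_induct) force+

lemma tc_cocl:
  assumes C: "\<And>a b c. (a,c) \<in> S \<Longrightarrow> a < b \<Longrightarrow> b < c \<Longrightarrow> (a,b) \<in> S \<or> (b,c) \<in> S"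
    and L: "\<And>a b. (a,b) \<in> S \<Longrightarrow> a < (b::nat)"
  shows "(a,c) \<in> S\<^sup>+ \<Longrightarrow> \<forall>b. a < b \<longrightarrow> b < c \<longrightarrow> (a,b) \<in> S\<^sup>+ \<or> (b,c) \<in> S\<^sup>+"
proof (induction rule: trancl_induct)
  case (base y)
  then show ?case using C by blast
next
  case (step d c)
  show ?case
  proof (intro allI impI)
    fix b assume ab: "a < b" and bc: "b < c"
    have ad: "a < d" using trancl_lt[OF step.hyps(1) L] by blast
    consider "b < d" | "b = d" | "d < b" by linarith
    then show "(a,b) \<in> S\<^sup>+ \<or> (b,c) \<in> S\<^sup>+"
    proof cases
      case 1
      then have "(a,b) \<in> S\<^sup>+ \<or> (b,d) \<in> S\<^sup>+" using step.IH ab by blast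
      then show ?thesis using step.hyps(2) by (meson trancl.trancl_into_trancl)
    next
      case 2 then show ?thesis using step.hyps(2) by blast
    next
      case 3
      then have "(d,b) \<in> S \<or> (b,c) \<in> S" using C[OF step.hyps(2)] bc by blast
      then show ?thesis using step.hyps(1) by (meson r_into_trancl' trancl.trancl_into_trancl)
    qed
  qed
qed

lemma join_exists: "x \<in> perms n \<Longrightarrow> y \<in> perms n \<Longrightarrow> \<exists>z. is_join n x y z"
proof -
  assume x: "x \<in> perms n" and y: "y \<in> perms n"
  define S where "S = invs x \<union> invs y"
  define B where "B = {(a,b). 1 \<le> a \<and> a < b \<and> (b::nat) \<le> n}"
  have SB: "S \<subseteq> B" using invs_bound[OF x] invs_bound[OF y] by (auto simp: S_def B_def)
  have tB: "trans B" unfolding trans_def B_def by auto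
  have TB: "S\<^sup>+ \<subseteq> B" using trancl_mono[OF _ SB] trancl_id[OF tB] by blast
  have L: "\<And>a b. (a,b) \<in> S \<Longrightarrow> a < b" using SB by (auto simp: B_def)
  have C: "\<And>a b c. (a,c) \<in> S \<Longrightarrow> a < b \<Longrightarrow> b < c \<Longrightarrow> (a,b) \<in> S \<or> (b,c) \<in> S"
    unfolding S_def using invs_cocl[OF x] invs_cocl[OF y] by blast
  have "\<exists>z\<in>perms n. invs z = S\<^sup>+"
    apply (rule construct)
    using TB apply (simp add: B_def)
     apply (rule trans_trancl)
    using tc_cocl[OF C L] by blast
  then obtain z where z: "z \<in> perms n" "invs z = S\<^sup>+" by blast
  have "is_join n x y z"
    unfolding is_join_def weak_le_def
  proof (intro conjI ballI impI)
    show "z \<in> perms n" by fact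
    show "invs x \<subseteq> invs z" "invs y \<subseteq> invs z" using z(2) by (auto simp: S_def)
    fix w assume w: "w \<in> perms n" and "invs x \<subseteq> invs w \<and> invs y \<subseteq> invs w"
    then have "S \<subseteq> invs w" by (simp add: S_def)
    moreover have "trans (invs w)" using w invs_trans by (simp add: perms_def)
    ultimately show "invs z \<subseteq> invs w" using z(2) trancl_mono[of _ S "invs w"] trancl_id[of "invs w"] by auto
  qed
  then show ?thesis by blast
qed


lemma w0_perms: "rev [1..<n] \<in> perms (n - 1)"
  unfolding perms_def by auto

lemma id_perms: "[1..<n] \<in> perms (n - 1)"
  unfolding perms_def by auto

lemma meet_cw:
  assumes n: "n \<ge> 1" and y: "y \<in> perms n"
  shows "is_meet n y (cn n (rev [1..<n])) (cn n (proj n y))"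
proof -
  have py: "proj n y \<in> perms (n - 1)" using proj_perms[OF n y] .
  note c1 = cn_props[OF n py] and c2 = cn_props[OF n w0_perms]
  have sub: "invs (proj n y) \<subseteq> invs (rev [1..<n])"
  proof clarify
    fix a b assume "(a,b) \<in> invs (proj n y)"
    then have ab: "a < b" "bef (proj n y) b a" by (auto simp: invs_bef)
    then have "a \<in> {1..n-1}" "b \<in> {1..n-1}" using py bef_set unfolding perms_def by blast+
    then show "(a,b) \<in> invs (rev [1..<n])" using ab(1) by (auto simp: invs_bef bef_rev bef_upt)
  qed
  show ?thesis unfolding is_meet_def
  proof (intro conjI ballI impI)
    show "cn n (proj n y) \<in> perms n" using c1 by simp
    show "weak_le (cn n (proj n y)) y" using weak_le_decomp[OF c1(1) y] c1 by simp
    show "weak_le (cn n (proj n y)) (cn n (rev [1..<n]))"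
      using weak_le_decomp[OF c1(1) c2(1)] c1 c2 sub by simp
    fix w assume w: "w \<in> perms n" and h: "weak_le w y \<and> weak_le w (cn n (rev [1..<n]))"
    then show "weak_le w (cn n (proj n y))"
      using weak_le_decomp[OF w y] weak_le_decomp[OF w c2(1)] weak_le_decomp[OF w c1(1)] c1 c2
      by simp
  qed
qed

lemma top_join:
  assumes n: "n \<ge> 1" and s: "s \<in> perms (n - 1)"
  shows "is_join n (cn n s) (n # [1..<n]) (n # s)"
proof -
  note c1 = cn_props[OF n s] and t1 = top_props[OF n s] and t2 = top_props[OF n id_perms]
  have e: "invs [1..<n] = {}" by (auto simp: invs_bef bef_upt)
  show ?thesis unfolding is_join_def
  proof (intro conjI ballI impI)
    show "n # s \<in> perms n" using t1 by simp
    show "weak_le (cn n s) (n # s)" using weak_le_decomp[OF c1(1) t1(1)] c1 t1 by simp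
    show "weak_le (n # [1..<n]) (n # s)" using weak_le_decomp[OF t2(1) t1(1)] t1 t2 e by simp
    fix w assume w: "w \<in> perms n" and h: "weak_le (cn n s) w \<and> weak_le (n # [1..<n]) w"
    then show "weak_le (n # s) w"
      using weak_le_decomp[OF c1(1) w] weak_le_decomp[OF t2(1) w] weak_le_decomp[OF t1(1) w] c1 t1 t2
      by simp
  qed
qed


lemma class_proj:
  assumes n: "n \<ge> 1" and L: "lattice_congruence n R" and pi: "p \<in> perms n"
  shows "proj n ` (R``{p}) = restr n R `` {proj n p}"
proof -
  have eq: "equiv (perms n) R"
    and J: "\<And>x x' y y' z z'. (x,x') \<in> R \<Longrightarrow> (y,y') \<in> R \<Longrightarrow> is_join n x y z \<Longrightarrow> is_join n x' y' z' \<Longrightarrow> (z,z') \<in> R"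
    and M: "\<And>x x' y y' z z'. (x,x') \<in> R \<Longrightarrow> (y,y') \<in> R \<Longrightarrow> is_meet n x y z \<Longrightarrow> is_meet n x' y' z' \<Longrightarrow> (z,z') \<in> R"
    using L unfolding lattice_congruence_def by blast+
  have refl: "\<And>x. x \<in> perms n \<Longrightarrow> (x,x) \<in> R" using eq by (simp add: equiv_def refl_on_def)
  have RS: "\<And>x y. (x,y) \<in> R \<Longrightarrow> x \<in> perms n \<and> y \<in> perms n"
    using eq by (auto simp: equiv_def refl_on_def)
  have symR: "\<And>x y. (x,y) \<in> R \<Longrightarrow> (y,x) \<in> R" using eq by (meson equiv_def symD)
  have transR: "\<And>x y z. (x,y) \<in> R \<Longrightarrow> (y,z) \<in> R \<Longrightarrow> (x,z) \<in> R" using eq by (meson equiv_def transD)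
  define s where "s = proj n p"
  have sp: "s \<in> perms (n - 1)" using proj_perms[OF n pi] by (simp add: s_def)
  have cwp: "cn n (rev [1..<n]) \<in> perms n" using cn_props[OF n w0_perms] by simp
  have cnp: "(cn n (proj n x), cn n (proj n y)) \<in> R" if xy: "(x,y) \<in> R" for x y
    using M[OF xy refl[OF cwp] meet_cw[OF n] meet_cw[OF n]] RS[OF xy] by blast
  show ?thesis unfolding s_def[symmetric]
  proof
    show "proj n ` (R``{p}) \<subseteq> restr n R``{s}"
    proof
      fix t assume "t \<in> proj n ` (R``{p})"
      then obtain y where y: "(p,y) \<in> R" "t = proj n y" by blast
      have "t \<in> perms (n - 1)" using proj_perms[OF n] RS[OF y(1)] y(2) by blast
      moreover have "(cn n s, cn n t) \<in> R" using cnp[OF y(1)] y(2) by (simp add: s_def)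
      ultimately show "t \<in> restr n R``{s}" using sp by (simp add: restr_def)
    qed
  next
    show "restr n R``{s} \<subseteq> proj n ` (R``{p})"
    proof
      fix t assume "t \<in> restr n R``{s}"
      then have tp: "t \<in> perms (n - 1)" and st: "(cn n s, cn n t) \<in> R" by (auto simp: restr_def)
      note ct = cn_props[OF n tp] and cs = cn_props[OF n sp]
      obtain p' where jp: "is_join n p (cn n t) p'" using join_exists[OF pi ct(1)] by blast
      have jpp: "is_join n p (cn n s) p" unfolding is_join_def
        using pi weak_le_decomp[OF cs(1) pi] cs by (simp add: weak_le_def s_def)
      have pp': "(p,p') \<in> R" using J[OF refl[OF pi] st jpp jp] .
      have p'p: "p' \<in> perms n" using jp by (simp add: is_join_def)
      define u' where "u' = proj n p'"
      have u'p: "u' \<in> perms (n - 1)" using proj_perms[OF n p'p] by (simp add: u'_def)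
      note cu = cn_props[OF n u'p] and tt = top_props[OF n tp] and tu = top_props[OF n u'p]
      have su: "(cn n s, cn n u') \<in> R" using cnp[OF pp'] by (simp add: s_def u'_def)
      have tu': "(cn n t, cn n u') \<in> R" using transR[OF symR[OF st] su] .
      have topR: "(n # t, n # u') \<in> R"
        using J[OF tu' refl[OF top_props(1)[OF n id_perms]] top_join[OF n tp] top_join[OF n u'p]] .
      define A where "A = Nset n p'"
      have "weak_le (cn n t) p'" using jp by (simp add: is_join_def)
      then have itu: "invs t \<subseteq> invs u'" using weak_le_decomp[OF ct(1) p'p] ct by (simp add: u'_def)
      obtain u v where uv: "t = u @ v" "set v \<subseteq> A" "u \<noteq> [] \<longrightarrow> last u \<notin> A"
        using split_suffix[of t A] by (elim exE conjE) simp
      have uvp: "u @ v \<in> perms (n - 1)" using tp uv(1) by simp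
      note ip = ins_props[OF n uvp]
      have dt: "distinct t" and st': "set t = {1..n-1}" using tp by (auto simp: perms_def)
      have du: "distinct u'" using u'p by (simp add: perms_def)
      have dp': "distinct p'" and sp': "set p' = {1..n}" using p'p by (auto simp: perms_def)
      have meet1: "is_meet n p' (n # t) (u @ n # v)" unfolding is_meet_def
      proof (intro conjI ballI impI)
        show "u @ n # v \<in> perms n" using ip by simp
        show "weak_le (u @ n # v) p'" using weak_le_decomp[OF ip(1) p'p] ip uv itu
          by (simp add: u'_def A_def)
        show "weak_le (u @ n # v) (n # t)" using weak_le_decomp[OF ip(1) tt(1)] ip uv tt st'
          by auto
        fix w assume w: "w \<in> perms n" and h: "weak_le w p' \<and> weak_le w (n # t)"
        have h1: "Nset n w \<subseteq> A" and h3: "invs (proj n w) \<subseteq> invs t"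
          using h weak_le_decomp[OF w p'p] weak_le_decomp[OF w tt(1)] tt by (simp_all add: A_def)
        have dw: "distinct w" and sw: "set w = {1..n}" using w by (auto simp: perms_def)
        have "Nset n w \<subseteq> set v"
        proof
          fix x assume xw: "x \<in> Nset n w"
          then have xA: "x \<in> A" and bwx: "bef w n x" using h1 by (auto simp: Nset_def)
          have xr: "x \<in> {1..n-1}" using Nset_sub[OF w] xw by blast
          show "x \<in> set v"
          proof (rule ccontr)
            assume "x \<notin> set v"
            then have xu: "x \<in> set u" using xr st' uv(1) by auto
            then have ne: "u \<noteq> []" by auto
            define y where "y = last u"
            have yA: "y \<notin> A" using uv(3) ne by (simp add: y_def)
            have xy: "x \<noteq> y" using xA yA by auto
            have "y \<in> set u" using ne by (simp add: y_def)
            then have yr: "y \<in> {1..n-1}" using st' uv(1) by auto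
            have "\<not> bef w n y" using h1 yA by (auto simp: Nset_def)
            moreover have "y \<in> set w" "n \<in> set w" "y \<noteq> n" using yr sw n by auto
            ultimately have "bef w y n" using bef_total by blast
            then have bwyx: "bef w y x" using bef_trans[OF dw _ bwx] by blast
            have "bef u x y" using bef_last[OF xu] xy by (simp add: y_def)
            then have btxy: "bef t x y" using uv(1) bef_append by blast
            show False
            proof (cases "x < y")
              case True
              have "(x,y) \<in> invs (proj n w)" using True bwyx xr yr by (auto simp: invs_bef bef_proj)
              then have "bef t y x" using h3 by (auto simp: invs_bef)
              then show False using bef_asym[OF dt btxy] by blast
            next
              case False
              then have "y < x" using xy by auto
              then have "(y,x) \<in> invs t" using btxy by (simp add: invs_bef)
              then have bu: "bef u' x y" using itu by (auto simp: invs_bef)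
              have "bef p' n x" using xA by (simp add: A_def Nset_def)
              moreover have "\<not> bef p' n y" using yA by (simp add: A_def Nset_def)
              moreover have "y \<in> set p'" "n \<in> set p'" "y \<noteq> n" using yr sp' n by auto
              ultimately have "bef p' y x" using bef_total bef_trans[OF dp'] by blast
              then have "bef u' y x" using xr yr by (auto simp: u'_def bef_proj)
              then show False using bef_asym[OF du bu] by blast
            qed
          qed
        qed
        then show "weak_le w (u @ n # v)"
          using weak_le_decomp[OF w ip(1)] ip h3 uv(1) by simp
      qed
      have meet2: "is_meet n p' (n # u') p'" unfolding is_meet_def
      proof (intro conjI ballI impI)
        show "p' \<in> perms n" by fact
        show "weak_le p' p'" by (simp add: weak_le_def)
        show "weak_le p' (n # u')" using weak_le_decomp[OF p'p tu(1)] tu Nset_sub[OF p'p]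
          by (simp add: u'_def)
      qed simp
      have "(u @ n # v, p') \<in> R" using M[OF refl[OF p'p] topR meet1 meet2] .
      then have "(p, u @ n # v) \<in> R" using transR[OF pp' symR] by blast
      moreover have "proj n (u @ n # v) = t" using ip uv(1) by simp
      ultimately show "t \<in> proj n ` (R``{p})" by force
    qed
  qed
qed


lemma restr_equiv:
  assumes n: "n \<ge> 1" and L: "lattice_congruence n R"
  shows "equiv (perms (n - 1)) (restr n R)"
proof -
  have eq: "equiv (perms n) R" using L unfolding lattice_congruence_def by blast
  have refl: "\<And>x. x \<in> perms n \<Longrightarrow> (x,x) \<in> R" using eq by (simp add: equiv_def refl_on_def)
  have symR: "\<And>x y. (x,y) \<in> R \<Longrightarrow> (y,x) \<in> R" using eq by (meson equiv_def symD)
  have transR: "\<And>x y z. (x,y) \<in> R \<Longrightarrow> (y,z) \<in> R \<Longrightarrow> (x,z) \<in> R" using eq by (meson equiv_def transD)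
  show ?thesis unfolding equiv_def
  proof (intro conjI)
    show "refl_on (perms (n - 1)) (restr n R)" unfolding refl_on_def restr_def
      using refl cn_props(1)[OF n] by auto
    show "sym (restr n R)" unfolding sym_def restr_def using symR by auto
    show "trans (restr n R)" unfolding trans_def restr_def using transR by auto
  qed (auto simp: restr_def)
qed

theorem mainTheorem4:
  fixes n :: nat and R :: "(nat list \<times> nat list) set"
  assumes "n \<ge> 1" and "lattice_congruence n R"
  shows "(\<forall>X \<in> perms n // R. proj n ` X \<in> perms (n - 1) // restr n R) \<and>
         (\<forall>X \<in> perms n // R. \<forall>Y \<in> perms n // R.
            proj n ` X = proj n ` Y \<or> proj n ` X \<inter> proj n ` Y = {})"
proof -
  have 1: "\<forall>X \<in> perms n // R. proj n ` X \<in> perms (n - 1) // restr n R"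
  proof
    fix X assume "X \<in> perms n // R"
    then obtain p where p: "p \<in> perms n" "X = R``{p}" by (auto elim: quotientE)
    have "proj n ` X = restr n R `` {proj n p}" using class_proj[OF assms p(1)] p(2) by simp
    moreover have "proj n p \<in> perms (n - 1)" using proj_perms[OF assms(1) p(1)] .
    ultimately show "proj n ` X \<in> perms (n - 1) // restr n R" by (simp add: quotientI)
  qed
  moreover have "\<forall>X \<in> perms n // R. \<forall>Y \<in> perms n // R.
            proj n ` X = proj n ` Y \<or> proj n ` X \<inter> proj n ` Y = {}"
    using 1 quotient_disj[OF restr_equiv[OF assms]] by blast
  ultimately show ?thesis by blast
qed

end
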